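(* Let $n>1$ and let $\varphi:\mathcal A\to\mathcal A$ be a continuous, multiplicative (i.e. $\varphi(AB)=\varphi(A)\varphi(B)$), norm preserving (i.e. $\|\varphi(A)\|=\|A\|$) map, not assumed linear, such that $\varphi(S)=S$. Then $\varphi$ is either homogeneous, i.e. $\varphi(\alpha A)=\alpha\varphi(A)$ for all $\alpha\in\mathbb C$, $A\in\mathcal A$, or skew-homogeneous, i.e. $\varphi(\alpha A)=\overline{\alpha}\varphi(A)$ for all $\alpha\in\mathbb C$, $A\in\mathcal A$.
   Context: $S$ denotes the $n\times n$ nilpotent Jordan block with ones on the superdiagonal and zeros elsewhere. $\mathcal A=\{f(S): f\text{ a complex polynomial}\}$ is the algebra of $n\times n$ upper-triangular Toeplitz matrices. $\|\cdot\|$ is the operator norm on $M_n(\mathbb C)$ induced by the Euclidean norm on $\mathbb C^n$. *)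

theory Defs
  imports "Jordan_Normal_Form.Matrix" "HOL-Computational_Algebra.Polynomial"
begin

definition Smat :: "nat \<Rightarrow> complex mat" where
  "Smat n = mat n n (\<lambda>(i,j). if j = Suc i then 1 else 0)"

definition poly_mat :: "complex poly \<Rightarrow> complex mat \<Rightarrow> complex mat" where
  "poly_mat p A = foldr (\<lambda>c B. c \<cdot>\<^sub>m 1\<^sub>m (dim_row A) + A * B) (coeffs p)
                        (0\<^sub>m (dim_row A) (dim_row A))"

text \<open>The algebra of upper-triangular Toeplitz matrices: all f(S).\<close>
definition Alg :: "nat \<Rightarrow> complex mat set" where
  "Alg n = {A. \<exists>p. A = poly_mat p (Smat n)}"

definition vec_norm :: "complex vec \<Rightarrow> real" where
  "vec_norm v = sqrt (\<Sum>i<dim_vec v. (cmod (v $ i))\<^sup>2)"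

definition op_norm :: "complex mat \<Rightarrow> real" where
  "op_norm A = Sup {vec_norm (A *\<^sub>v v) | v. v \<in> carrier_vec (dim_col A) \<and> vec_norm v \<le> 1}"

end

theory Submission
  imports Defs
begin


definition tp :: "nat \<Rightarrow> (nat \<Rightarrow> complex) \<Rightarrow> complex mat" where
  "tp n c = mat n n (\<lambda>(i,j). if i \<le> j then c (j - i) else 0)"

definition conv :: "(nat \<Rightarrow> complex) \<Rightarrow> (nat \<Rightarrow> complex) \<Rightarrow> nat \<Rightarrow> complex" where
  "conv a b k = (\<Sum>l\<le>k. a l * b (k - l))"

definition dl :: "nat \<Rightarrow> nat \<Rightarrow> complex" where
  "dl m k = (if k = m then 1 else 0)"

lemma tp_carrier[simp]: "tp n c \<in> carrier_mat n n"
  and tp_dim[simp]: "dim_row (tp n c) = n" "dim_col (tp n c) = n"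
  by (auto simp: tp_def)

lemma tp_index[simp]: "i < n \<Longrightarrow> j < n \<Longrightarrow> tp n c $$ (i,j) = (if i \<le> j then c (j - i) else 0)"
  by (simp add: tp_def)

lemma tp_cong: "(\<And>k. k < n \<Longrightarrow> a k = b k) \<Longrightarrow> tp n a = tp n b"
  by (rule eq_matI) auto

lemma tp_eq_iff: "tp n a = tp n b \<longleftrightarrow> (\<forall>k<n. a k = b k)"
proof
  assume h: "tp n a = tp n b"
  show "\<forall>k<n. a k = b k"
  proof (intro allI impI)
    fix k assume k: "k < n"
    have "tp n a $$ (0,k) = tp n b $$ (0,k)" using h by simp
    thus "a k = b k" using k by simp
  qed
qed (auto intro: tp_cong)

lemma tp_add: "tp n a + tp n b = tp n (\<lambda>k. a k + b k)"
  by (rule eq_matI) auto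
lemma tp_minus: "tp n a - tp n b = tp n (\<lambda>k. a k - b k)"
  by (rule eq_matI) auto
lemma tp_smult: "\<alpha> \<cdot>\<^sub>m tp n a = tp n (\<lambda>k. \<alpha> * a k)"
  by (rule eq_matI) auto
lemma tp_one: "1\<^sub>m n = tp n (dl 0)"
  by (rule eq_matI) (auto simp: dl_def)
lemma tp_zero: "0\<^sub>m n n = tp n (\<lambda>k. 0)"
  by (rule eq_matI) auto
lemma tp_S: "Smat n = tp n (dl 1)"
  by (rule eq_matI) (auto simp: dl_def Smat_def)

lemma conv_sum:
  fixes a b :: "nat \<Rightarrow> complex"
  assumes "i \<le> j" "j < n"
  shows "(\<Sum>m<n. (if i \<le> m then a (m - i) else 0) * (if m \<le> j then b (j - m) else 0))
     = (\<Sum>l\<le>j - i. a l * b (j - i - l))"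
proof -
  have "(\<Sum>m<n. (if i \<le> m then a (m - i) else 0) * (if m \<le> j then b (j - m) else 0))
     = (\<Sum>m\<in>{i..j}. (if i \<le> m then a (m - i) else 0) * (if m \<le> j then b (j - m) else 0))"
    using assms by (intro sum.mono_neutral_right) auto
  also have "\<dots> = (\<Sum>m\<in>{i..j}. a (m - i) * b (j - m))" by (rule sum.cong) auto
  also have "{i..j} = {0+i..(j-i)+i}" using assms by simp
  also have "(\<Sum>m\<in>{0+i..(j-i)+i}. a (m - i) * b (j - m)) = (\<Sum>l\<in>{0..j-i}. a (l + i - i) * b (j - (l+i)))"
    by (rule sum.shift_bounds_cl_nat_ivl)
  also have "\<dots> = (\<Sum>l\<le>j - i. a l * b (j - i - l))"
    by (simp add: atLeast0AtMost diff_diff_left add.commute)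
  finally show ?thesis .
qed

lemma tp_mult: "tp n a * tp n b = tp n (conv a b)"
proof (rule eq_matI)
  fix i j assume i: "i < dim_row (tp n (conv a b))" and j: "j < dim_col (tp n (conv a b))"
  have "(tp n a * tp n b) $$ (i,j) = (\<Sum>m<n. (if i \<le> m then a (m - i) else 0) * (if m \<le> j then b (j - m) else 0))"
    using i j by (simp add: scalar_prod_def lessThan_atLeast0)
  also have "\<dots> = tp n (conv a b) $$ (i,j)"
  proof (cases "i \<le> j")
    case True thus ?thesis using i j conv_sum[OF True, of n a b] by (simp add: conv_def)
  next
    case False
    thus ?thesis using i j False by (auto intro!: sum.neutral)
  qed
  finally show "(tp n a * tp n b) $$ (i,j) = tp n (conv a b) $$ (i,j)" .
qed auto


lemma conv_dl_right: "conv a (dl m) k = (if m \<le> k then a (k - m) else 0)"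
proof -
  have "conv a (dl m) k = (\<Sum>l\<le>k. if l = k - m \<and> m \<le> k then a l else 0)"
    unfolding conv_def dl_def by (rule sum.cong) auto
  also have "\<dots> = (if m \<le> k then a (k - m) else 0)"
    by (cases "m \<le> k") auto
  finally show ?thesis .
qed

lemma conv_dl_left: "conv (dl m) a k = (if m \<le> k then a (k - m) else 0)"
proof -
  have "conv (dl m) a k = (\<Sum>l\<le>k. if l = m then a (k - l) else 0)"
    unfolding conv_def dl_def by (rule sum.cong) auto
  also have "\<dots> = (if m \<le> k then a (k - m) else 0)"
    by (cases "m \<le> k") auto
  finally show ?thesis .
qed

lemma conv_0[simp]: "conv a b 0 = a 0 * b 0"
  by (simp add: conv_def)

lemma conv_1: "conv a b 1 = a 0 * b 1 + a 1 * b 0"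
  by (simp add: conv_def atMost_Suc)

lemma conv_cong:
  assumes "\<And>j. j < n \<Longrightarrow> a j = a' j" "\<And>j. j < n \<Longrightarrow> b j = b' j" "k < n"
  shows "conv a b k = conv a' b' k"
  unfolding conv_def using assms by (intro sum.cong) auto

lemma dimS[simp]: "dim_row (Smat n) = n" by (simp add: Smat_def)

lemma poly_mat_tp: "poly_mat p (Smat n) = tp n (coeff p)"
proof (induction p rule: pCons_induct)
  case 0
  show ?case by (simp add: poly_mat_def tp_zero)
next
  case (pCons a p)
  have co: "coeffs (pCons a p) = a # coeffs p" using pCons.hyps by auto
  have "poly_mat (pCons a p) (Smat n) = a \<cdot>\<^sub>m 1\<^sub>m n + Smat n * poly_mat p (Smat n)"
    unfolding poly_mat_def co by simp
  also have "\<dots> = tp n (\<lambda>k. a * dl 0 k + conv (dl 1) (coeff p) k)"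
    unfolding pCons.IH by (simp add: tp_one tp_S tp_smult tp_mult tp_add)
  also have "\<dots> = tp n (coeff (pCons a p))"
    by (rule tp_cong) (auto simp: conv_dl_left dl_def coeff_pCons split: nat.split)
  finally show ?case .
qed

lemma Alg_iff: "A \<in> Alg n \<longleftrightarrow> (\<exists>c. A = tp n c)"
proof
  assume "A \<in> Alg n"
  thus "\<exists>c. A = tp n c" by (auto simp: Alg_def poly_mat_tp)
next
  assume "\<exists>c. A = tp n c"
  then obtain c where c: "A = tp n c" by blast
  have "poly_mat (Poly (map c [0..<n])) (Smat n) = tp n c"
    unfolding poly_mat_tp by (rule tp_cong) (simp add: nth_default_def)
  thus "A \<in> Alg n" unfolding Alg_def c by (metis (mono_tags) mem_Collect_eq)
qed

lemma tp_Alg[simp]: "tp n c \<in> Alg n" by (auto simp: Alg_iff)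



lemma vec_norm_bound:
  assumes "\<And>i. i < dim_vec w \<Longrightarrow> cmod (w $ i) \<le> M"
  shows "vec_norm w \<le> sqrt (real (dim_vec w) * M\<^sup>2)"
proof -
  have "(\<Sum>i<dim_vec w. (cmod (w $ i))\<^sup>2) \<le> (\<Sum>i<dim_vec w. M\<^sup>2)"
    using assms by (intro sum_mono power_mono) auto
  thus ?thesis unfolding vec_norm_def by simp
qed

lemma vec_norm_comp_le:
  assumes "vec_norm v \<le> 1" "k < dim_vec v"
  shows "cmod (v $ k) \<le> 1"
proof -
  have "(cmod (v $ k))\<^sup>2 \<le> (\<Sum>i<dim_vec v. (cmod (v $ i))\<^sup>2)"
    using assms(2) by (intro member_le_sum) auto
  also have "\<dots> \<le> 1" using assms(1) unfolding vec_norm_def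
    by (metis real_sqrt_le_1_iff)
  finally show ?thesis by (simp add: power_le_one_iff)
qed

lemma op_norm_bdd:
  assumes A: "A \<in> carrier_mat n n"
  shows "bdd_above {vec_norm (A *\<^sub>v v) | v. v \<in> carrier_vec (dim_col A) \<and> vec_norm v \<le> 1}"
proof -
  define C where "C = (\<Sum>i<n. \<Sum>k<n. cmod (A $$ (i,k)))"
  have "vec_norm (A *\<^sub>v v) \<le> sqrt (real n * C\<^sup>2)" if v: "v \<in> carrier_vec n" "vec_norm v \<le> 1" for v
  proof -
    have "cmod ((A *\<^sub>v v) $ i) \<le> C" if i: "i < n" for i
    proof -
      have "(A *\<^sub>v v) $ i = (\<Sum>k<n. A $$ (i,k) * v $ k)"
        using A v i by (simp add: scalar_prod_def lessThan_atLeast0)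
      also have "cmod \<dots> \<le> (\<Sum>k<n. cmod (A $$ (i,k) * v $ k))" by (rule norm_sum)
      also have "\<dots> \<le> (\<Sum>k<n. cmod (A $$ (i,k)))"
        using v vec_norm_comp_le[of v] by (intro sum_mono) (auto simp: norm_mult intro: mult_left_le)
      also have "\<dots> \<le> C" unfolding C_def using i
        by (intro member_le_sum) (auto intro: sum_nonneg)
      finally show ?thesis .
    qed
    thus ?thesis using A by (intro order.trans[OF vec_norm_bound[of _ C]]) auto
  qed
  thus ?thesis using A unfolding bdd_above_def by auto
qed

lemma col_le_op_norm:
  assumes A: "A \<in> carrier_mat n n" and j: "j < n"
  shows "(\<Sum>i<n. (cmod (A $$ (i,j)))\<^sup>2) \<le> (op_norm A)\<^sup>2" "0 \<le> op_norm A"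
proof -
  let ?v = "unit_vec n j :: complex vec"
  have vn: "vec_norm ?v = 1"
  proof -
    have "(\<Sum>i<n. (cmod (?v $ i))\<^sup>2) = (\<Sum>i<n. if i = j then 1 else 0)"
      using j by (intro sum.cong) auto
    thus ?thesis unfolding vec_norm_def using j by simp
  qed
  have Av: "(A *\<^sub>v ?v) $ i = A $$ (i,j)" if i: "i < n" for i
  proof -
    have "(A *\<^sub>v ?v) $ i = (\<Sum>k<n. A $$ (i,k) * (if k = j then 1 else 0))"
      using A i j by (simp add: scalar_prod_def lessThan_atLeast0)
    also have "\<dots> = A $$ (i,j)" using j by (simp add: if_distrib cong: if_cong)
    finally show ?thesis .
  qed
  have "vec_norm (A *\<^sub>v ?v) = sqrt (\<Sum>i<n. (cmod (A $$ (i,j)))\<^sup>2)"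
    unfolding vec_norm_def using A Av by simp
  moreover have "vec_norm (A *\<^sub>v ?v) \<le> op_norm A"
    unfolding op_norm_def
    by (rule cSup_upper[OF _ op_norm_bdd[OF A]]) (use A vn in auto)
  ultimately have le: "sqrt (\<Sum>i<n. (cmod (A $$ (i,j)))\<^sup>2) \<le> op_norm A" by simp
  show "0 \<le> op_norm A" by (rule order.trans[OF _ le]) (simp add: sum_nonneg)
  from le show "(\<Sum>i<n. (cmod (A $$ (i,j)))\<^sup>2) \<le> (op_norm A)\<^sup>2"
    by (metis power_mono real_sqrt_ge_zero real_sqrt_pow2 sum_nonneg zero_le_power2)
qed

lemma entry_le_op_norm:
  assumes A: "A \<in> carrier_mat n n" and i: "i < n" and j: "j < n"
  shows "cmod (A $$ (i,j)) \<le> op_norm A"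
proof -
  have "(cmod (A $$ (i,j)))\<^sup>2 \<le> (\<Sum>i<n. (cmod (A $$ (i,j)))\<^sup>2)"
    using i by (intro member_le_sum) auto
  also have "\<dots> \<le> (op_norm A)\<^sup>2" by (rule col_le_op_norm[OF A j])
  finally show ?thesis using col_le_op_norm(2)[OF A j] by (rule power2_le_imp_le)
qed

lemma op_norm_scalar:
  assumes n: "n > 0"
  shows "op_norm (\<alpha> \<cdot>\<^sub>m 1\<^sub>m n) = cmod \<alpha>"
proof (rule antisym)
  have "cmod ((\<alpha> \<cdot>\<^sub>m 1\<^sub>m n) $$ (0,0)) \<le> op_norm (\<alpha> \<cdot>\<^sub>m 1\<^sub>m n)"
    by (rule entry_le_op_norm[of _ n]) (use n in auto)
  thus "cmod \<alpha> \<le> op_norm (\<alpha> \<cdot>\<^sub>m 1\<^sub>m n)" using n by simp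
next
  show "op_norm (\<alpha> \<cdot>\<^sub>m 1\<^sub>m n) \<le> cmod \<alpha>"
    unfolding op_norm_def
  proof (rule cSup_least)
    show "{vec_norm (\<alpha> \<cdot>\<^sub>m 1\<^sub>m n *\<^sub>v v) | v. v \<in> carrier_vec (dim_col (\<alpha> \<cdot>\<^sub>m 1\<^sub>m n)) \<and> vec_norm v \<le> 1} \<noteq> {}"
    proof -
      have "vec_norm (0\<^sub>v n :: complex vec) \<le> 1" by (simp add: vec_norm_def)
      thus ?thesis by (auto intro!: exI[of _ "0\<^sub>v n"])
    qed
  next
    fix x assume "x \<in> {vec_norm (\<alpha> \<cdot>\<^sub>m 1\<^sub>m n *\<^sub>v v) | v. v \<in> carrier_vec (dim_col (\<alpha> \<cdot>\<^sub>m 1\<^sub>m n)) \<and> vec_norm v \<le> 1}"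
    then obtain v where v: "v \<in> carrier_vec n" "vec_norm v \<le> 1" and x: "x = vec_norm (\<alpha> \<cdot>\<^sub>m 1\<^sub>m n *\<^sub>v v)" by auto
    have e: "(\<alpha> \<cdot>\<^sub>m 1\<^sub>m n *\<^sub>v v) $ i = \<alpha> * v $ i" if i: "i < n" for i
    proof -
      have "(\<alpha> \<cdot>\<^sub>m 1\<^sub>m n *\<^sub>v v) $ i = (\<Sum>k<n. \<alpha> * (if k = i then 1 else 0) * v $ k)"
        using v i by (simp add: scalar_prod_def lessThan_atLeast0)
      also have "\<dots> = (\<Sum>k<n. if k = i then \<alpha> * v $ k else 0)" by (rule sum.cong) auto
    also have "\<dots> = \<alpha> * v $ i" using i by simp
      finally show ?thesis .
    qed
    have "x = sqrt (\<Sum>i<n. (cmod \<alpha>)\<^sup>2 * (cmod (v $ i))\<^sup>2)"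
      unfolding x vec_norm_def using v e by (simp add: norm_mult power_mult_distrib)
    also have "\<dots> = cmod \<alpha> * vec_norm v"
      using v by (simp add: vec_norm_def sum_distrib_left[symmetric] real_sqrt_mult)
    also have "\<dots> \<le> cmod \<alpha>" using v(2) by (simp add: mult_left_le)
    finally show "x \<le> cmod \<alpha>" .
  qed
qed

lemma op_norm_zero_imp:
  assumes A: "A \<in> carrier_mat n n" and z: "op_norm A = 0"
  shows "A = 0\<^sub>m n n"
proof (rule eq_matI)
  fix i j assume "i < dim_row (0\<^sub>m n n :: complex mat)" "j < dim_col (0\<^sub>m n n :: complex mat)"
  hence "cmod (A $$ (i,j)) \<le> 0" using entry_le_op_norm[OF A, of i j] z by simp
  thus "A $$ (i,j) = 0\<^sub>m n n $$ (i,j)" using \<open>i < _\<close> \<open>j < _\<close> by simp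
qed (use A in auto)



lemma real_fix:
  fixes w :: complex and r :: real
  assumes "cmod w = \<bar>r\<bar>" "cmod (w - 1) = \<bar>r - 1\<bar>"
  shows "w = of_real r"
proof -
  have a: "(Re w)\<^sup>2 + (Im w)\<^sup>2 = r\<^sup>2" using assms(1) cmod_power2[of w] by simp
  have b: "(Re w - 1)\<^sup>2 + (Im w)\<^sup>2 = (r - 1)\<^sup>2" using assms(2) cmod_power2[of "w - 1"] by simp
  have "Re w = r" using a b by (simp add: power2_eq_square algebra_simps)
  moreover have "Im w = 0" using a \<open>Re w = r\<close> by simp
  ultimately show ?thesis by (simp add: complex_eq_iff)
qed

lemma sq_minus_one:
  fixes w :: complex
  assumes "w * w = -1"
  shows "w = \<i> \<or> w = - \<i>"
proof -
  have "(w - \<i>) * (w + \<i>) = 0" using assms by (simp add: algebra_simps)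
  thus ?thesis by (auto simp: eq_neg_iff_add_eq_0)
qed


lemma char_lemma:
  fixes g kk :: "complex \<Rightarrow> complex"
  assumes add: "\<And>c d. kk (c + d) = kk c + kk d"
    and gmult: "\<And>a b. g (a * b) = g a * g b"
    and gnorm: "\<And>a. cmod (g a) = cmod a"
    and gk: "\<And>z. z \<noteq> 0 \<Longrightarrow> g z * kk (1 / z) = kk 1"
    and nz: "kk 1 \<noteq> 0"
  shows "(\<forall>z. g z = z) \<or> (\<forall>z. g z = cnj z)"
proof -
  define v where "v = kk 1"
  define l where "l w = kk w / v" for w
  have ladd: "l (c + d) = l c + l d" for c d unfolding l_def add by (simp add: add_divide_distrib)
  have l0: "l 0 = 0" using ladd[of 0 0] by simp
  have l1: "l 1 = 1" unfolding l_def v_def using nz by simp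
  have lneg: "l (- c) = - l c" for c using ladd[of c "-c"] l0 by (simp add: eq_neg_iff_add_eq_0 add.commute)
  have g0: "g z \<noteq> 0" if "z \<noteq> 0" for z using gnorm[of z] that by auto
  have linv: "l w = 1 / g (1 / w)" if w: "w \<noteq> 0" for w
  proof -
    have "g (1 / w) * kk w = v" using gk[of "1 / w"] w unfolding v_def by simp
    thus ?thesis unfolding l_def using g0[of "1/w"] w nz v_def
      by (auto simp: field_simps)
  qed
  have ginv: "g z = 1 / l (1 / z)" if z: "z \<noteq> 0" for z
    using linv[of "1/z"] z by simp
  have lnorm: "cmod (l w) = cmod w" for w
  proof (cases "w = 0")
    case True thus ?thesis using l0 by simp
  next
    case False thus ?thesis using linv[OF False] gnorm[of "1/w"] by (simp add: norm_divide)
  qed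
  have lmult: "l (a * b) = l a * l b" for a b
  proof (cases "a = 0 \<or> b = 0")
    case True thus ?thesis using l0 by auto
  next
    case False
    hence "l (a * b) = 1 / g ((1 / a) * (1 / b))" using linv[of "a*b"] by simp
    also have "\<dots> = l a * l b" using False linv[of a] linv[of b] gmult[of "1/a" "1/b"] by simp
    finally show ?thesis .
  qed
  have lreal: "l (of_real r) = of_real r" for r
  proof (rule real_fix)
    show "cmod (l (of_real r)) = \<bar>r\<bar>" using lnorm by simp
    have "l (of_real r) - 1 = l (of_real (r - 1))"
      using ladd[of "of_real r" "- 1"] lneg[of 1] l1 by simp
    thus "cmod (l (of_real r) - 1) = \<bar>r - 1\<bar>" using lnorm[of "of_real (r - 1)"]
      by (metis norm_of_real of_real_1 of_real_diff)
  qed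
  have "l \<i> * l \<i> = -1" using lmult[of \<i> \<i>] lneg[of 1] l1 by simp
  hence li: "l \<i> = \<i> \<or> l \<i> = - \<i>" by (rule sq_minus_one)
  have ldec: "l w = of_real (Re w) + of_real (Im w) * l \<i>" for w
  proof -
    have "l w = l (of_real (Re w) + of_real (Im w) * \<i>)"
      by (metis complex_eq mult.commute)
    also have "\<dots> = of_real (Re w) + of_real (Im w) * l \<i>"
      using ladd lmult lreal by simp
    finally show ?thesis .
  qed
  from li show ?thesis
  proof
    assume h: "l \<i> = \<i>"
    have "l w = w" for w using ldec[of w] h by (metis complex_eq mult.commute)
    hence "g z = z" for z
      using ginv gnorm[of 0] by (cases "z = 0") auto
    thus ?thesis by blast
  next
    assume h: "l \<i> = - \<i>"
    have "l w = cnj w" for w using ldec[of w] h by (simp add: complex_eq_iff)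
    hence "g z = cnj z" for z
      using ginv gnorm[of 0] by (cases "z = 0") (auto simp: complex_cnj_divide)
    thus ?thesis by blast
  qed
qed


lemma lim_lemma:
  fixes g kk :: "complex \<Rightarrow> complex"
  assumes key: "\<And>\<eta>. \<eta> > 0 \<Longrightarrow> \<exists>\<delta>>0. \<forall>\<epsilon>. \<epsilon> \<noteq> 0 \<and> cmod \<epsilon> < \<delta> \<longrightarrow> cmod (g \<epsilon> * kk (1 / \<epsilon>) - 1) < \<eta>"
    and gmult: "\<And>a b. g (a * b) = g a * g b"
    and knat: "\<And>m c. kk (of_nat m * c) = of_nat m * kk c"
    and g1: "g 1 = 1"
  shows "kk 1 \<noteq> 0" "\<And>z. z \<noteq> 0 \<Longrightarrow> g z * kk (1 / z) = kk 1"
proof -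
  define a where "a m = g (1 / of_nat (Suc m)) * of_nat (Suc m)" for m
  have lim: "(\<lambda>m. a m * (g z * kk (1 / z))) \<longlonglongrightarrow> 1" if z: "z \<noteq> 0" for z
  proof (rule LIMSEQ_I)
    fix r :: real assume r: "r > 0"
    obtain \<delta> where d: "\<delta> > 0" "\<forall>\<epsilon>. \<epsilon> \<noteq> 0 \<and> cmod \<epsilon> < \<delta> \<longrightarrow> cmod (g \<epsilon> * kk (1 / \<epsilon>) - 1) < r"
      using key[OF r] by blast
    obtain no :: nat where no: "cmod z / \<delta> < of_nat no" using reals_Archimedean2 by blast
    show "\<exists>no. \<forall>m\<ge>no. norm (a m * (g z * kk (1 / z)) - 1) < r"
    proof (intro exI allI impI)
      fix m assume m: "no \<le> m"
      define e where "e = z / of_nat (Suc m)"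
      have sn: "(1 + of_nat m :: complex) \<noteq> 0"
        by (metis add.commute of_nat_Suc of_nat_neq_0)
      have e0: "e \<noteq> 0" using z sn by (simp add: e_def)
      have "cmod z / \<delta> < of_nat (Suc m)" using no m by simp
      hence "cmod z < \<delta> * of_nat (Suc m)" using d(1) by (simp add: field_simps)
      moreover have "cmod e = cmod z / real (Suc m)"
        unfolding e_def norm_divide norm_of_nat ..
      ultimately have ed: "cmod e < \<delta>"
        by (simp add: divide_less_eq del: of_nat_Suc)
      have "g e * kk (1 / e) = a m * (g z * kk (1 / z))"
      proof -
        have "g e = g z * g (1 / of_nat (Suc m))" unfolding e_def
          using gmult[of z "1 / of_nat (Suc m)"] by simp
        moreover have "kk (1 / e) = of_nat (Suc m) * kk (1 / z)"
        proof -
          have "1 / e = of_nat (Suc m) * (1 / z)" unfolding e_def by simp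
          thus ?thesis using knat[of "Suc m" "1 / z"] by metis
        qed
        ultimately show ?thesis unfolding a_def by simp
      qed
      thus "norm (a m * (g z * kk (1 / z)) - 1) < r" using d(2) e0 ed by metis
    qed
  qed
  have lim1: "(\<lambda>m. a m * kk 1) \<longlonglongrightarrow> 1" using lim[of 1] g1 by simp
  show nz: "kk 1 \<noteq> 0"
  proof
    assume "kk 1 = 0"
    hence "(\<lambda>m. a m * kk 1) \<longlonglongrightarrow> 0" by simp
    with lim1 show False using LIMSEQ_unique by fastforce
  qed
  have "(\<lambda>m. a m * kk 1 * (1 / kk 1)) \<longlonglongrightarrow> 1 * (1 / kk 1)"
    by (rule tendsto_mult[OF lim1 tendsto_const])
  hence alim: "a \<longlonglongrightarrow> 1 / kk 1" using nz by simp
  fix z :: complex assume z: "z \<noteq> 0"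
  have "(\<lambda>m. a m * (g z * kk (1 / z))) \<longlonglongrightarrow> 1 / kk 1 * (g z * kk (1 / z))"
    by (rule tendsto_mult[OF alim tendsto_const])
  hence "1 / kk 1 * (g z * kk (1 / z)) = 1" using lim[OF z] LIMSEQ_unique by blast
  thus "g z * kk (1 / z) = kk 1" using nz by (simp add: field_simps)
qed



lemma conv_Suc0[simp]: "conv a b (Suc 0) = a 0 * b (Suc 0) + a (Suc 0) * b 0"
  using conv_1[of a b] by simp

theorem lemma2p4:
  fixes n :: nat and \<phi> :: "complex mat \<Rightarrow> complex mat"
  assumes n: "n > 1"
    and maps: "\<forall>A \<in> Alg n. \<phi> A \<in> Alg n"
    and cont: "\<forall>A \<in> Alg n. \<forall>\<epsilon> > 0. \<exists>\<delta> > 0. \<forall>B \<in> Alg n.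
                 op_norm (B - A) < \<delta> \<longrightarrow> op_norm (\<phi> B - \<phi> A) < \<epsilon>"
    and mult: "\<forall>A \<in> Alg n. \<forall>B \<in> Alg n. \<phi> (A * B) = \<phi> A * \<phi> B"
    and normp: "\<forall>A \<in> Alg n. op_norm (\<phi> A) = op_norm A"
    and fixS: "\<phi> (Smat n) = Smat n"
  shows "(\<forall>\<alpha>::complex. \<forall>A \<in> Alg n. \<phi> (\<alpha> \<cdot>\<^sub>m A) = \<alpha> \<cdot>\<^sub>m \<phi> A)
       \<or> (\<forall>\<alpha>::complex. \<forall>A \<in> Alg n. \<phi> (\<alpha> \<cdot>\<^sub>m A) = cnj \<alpha> \<cdot>\<^sub>m \<phi> A)"
proof -
  define N where "N = n - 1"
  have n0: "0 < n" and nN: "n = Suc N" and N1: "1 \<le> N" using n by (auto simp: N_def)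
  have ex: "\<exists>d. \<phi> (tp n c) = tp n d" for c using maps tp_Alg[of n c] by (auto simp: Alg_iff)
  define F where "F c = (SOME d. \<phi> (tp n c) = tp n d)" for c
  have F: "\<phi> (tp n c) = tp n (F c)" for c unfolding F_def by (rule someI_ex[OF ex])
  have Fmult: "F (conv a b) k = conv (F a) (F b) k" if k: "k < n" for a b k
  proof -
    have "tp n (F (conv a b)) = tp n (conv (F a) (F b))"
      using mult tp_Alg[of n a] tp_Alg[of n b] by (simp add: F[symmetric] tp_mult[symmetric])
    thus ?thesis using k by (simp add: tp_eq_iff)
  qed
  have Fcong: "F a k = F b k" if "\<And>j. j < n \<Longrightarrow> a j = b j" "k < n" for a b k
  proof -
    have "tp n a = tp n b" using that by (intro tp_cong) auto
    hence "tp n (F a) = tp n (F b)" by (simp add: F[symmetric])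
    thus ?thesis using that(2) by (simp add: tp_eq_iff)
  qed
  have Fnorm: "op_norm (tp n (F c)) = op_norm (tp n c)" for c
    using normp tp_Alg[of n c] by (simp add: F[symmetric])
  have Fdl1: "F (dl 1) k = dl 1 k" if "k < n" for k
  proof -
    have "tp n (F (dl 1)) = tp n (dl 1)" using fixS unfolding tp_S F .
    thus ?thesis using that by (simp add: tp_eq_iff)
  qed
  have dl_suc: "conv (dl m) (dl 1) j = dl (Suc m) j" for m j
    by (auto simp: conv_dl_right dl_def)
  have Fdlm: "\<forall>k<n. F (dl m) k = dl m k" if "1 \<le> m" for m
    using that
  proof (induction m rule: dec_induct)
    case base thus ?case using Fdl1 by simp
  next
    case (step m)
    show ?case
    proof (intro allI impI)
      fix k assume k: "k < n"
      have "F (dl (Suc m)) k = F (conv (dl m) (dl 1)) k" using k dl_suc by (intro Fcong) metis+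
      also have "\<dots> = conv (F (dl m)) (F (dl 1)) k" using k by (rule Fmult)
      also have "\<dots> = conv (dl m) (dl 1) k" using k step.IH Fdl1 by (intro conv_cong) auto
      finally show "F (dl (Suc m)) k = dl (Suc m) k" using dl_suc by metis
    qed
  qed
  define g where "g \<alpha> = F (\<lambda>k. \<alpha> * dl 0 k) 0" for \<alpha>
  have tp_sc: "tp n (\<lambda>k. \<alpha> * dl 0 k) = \<alpha> \<cdot>\<^sub>m 1\<^sub>m n" for \<alpha>
    by (simp add: tp_one tp_smult)
  have F0: "F b 0 = g (b 0)" for b
  proof -
    have N: "N < n" using nN by simp
    have eq: "F (conv b (dl N)) N = F (conv (\<lambda>k. b 0 * dl 0 k) (dl N)) N"
      using N by (intro Fcong) (auto simp: conv_dl_right dl_def nN)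
    have L: "F (conv c (dl N)) N = F c 0" for c
    proof -
      have "F (conv c (dl N)) N = conv (F c) (F (dl N)) N" using N by (rule Fmult)
      also have "\<dots> = conv (F c) (dl N) N" using N Fdlm[OF N1] by (intro conv_cong) auto
      finally show ?thesis by (simp add: conv_dl_right)
    qed
    show ?thesis using eq L[of b] L[of "\<lambda>k. b 0 * dl 0 k"] unfolding g_def by simp
  qed
  have gmult: "g (a * b) = g a * g b" for a b
  proof -
    have "F (conv (\<lambda>k. a * dl 0 k) (\<lambda>k. b * dl 0 k)) 0 = g a * g b"
      using Fmult[of 0] n0 unfolding g_def by simp
    thus ?thesis by (simp add: F0 dl_def)
  qed
  have g1: "g 1 = 1"
  proof -
    have "F (dl 1) 1 = F (conv (dl 0) (dl 1)) 1" using n by (intro Fcong) (auto simp: conv_dl_left)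
    also have "\<dots> = conv (F (dl 0)) (F (dl 1)) 1" using n by (intro Fmult) 
    also have "\<dots> = F (dl 0) 0" using Fdl1[of 0] Fdl1[of 1] n n0 by (simp add: conv_1 dl_def)
    finally have "F (dl 0) 0 = 1" using Fdl1[of 1] n by (simp add: dl_def)
    thus ?thesis using F0[of "dl 0"] by (simp add: dl_def)
  qed
  have gle: "cmod (g \<alpha>) \<le> cmod \<alpha>" for \<alpha>
  proof -
    have "cmod (g \<alpha>) = cmod (tp n (F (\<lambda>k. \<alpha> * dl 0 k)) $$ (0,0))" using n0 by (simp add: g_def)
    also have "\<dots> \<le> op_norm (tp n (F (\<lambda>k. \<alpha> * dl 0 k)))"
      by (rule entry_le_op_norm[of _ n]) (use n0 in auto)
    also have "\<dots> = cmod \<alpha>" by (simp add: Fnorm tp_sc op_norm_scalar[OF n0])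
    finally show ?thesis .
  qed
  have gnorm: "cmod (g \<alpha>) = cmod \<alpha>" for \<alpha>
  proof (cases "\<alpha> = 0")
    case True thus ?thesis using gle[of 0] by simp
  next
    case False
    have "g \<alpha> * g (1 / \<alpha>) = 1" using gmult[of \<alpha> "1/\<alpha>"] False g1 by simp
    hence "cmod (g \<alpha>) * cmod (g (1 / \<alpha>)) = 1" by (metis norm_mult norm_one)
    moreover have "cmod (g (1 / \<alpha>)) \<le> 1 / cmod \<alpha>" using gle[of "1/\<alpha>"] by (simp add: norm_divide)
    ultimately have "1 \<le> cmod (g \<alpha>) * (1 / cmod \<alpha>)"
      by (metis mult_left_mono norm_ge_zero)
    hence "cmod \<alpha> \<le> cmod (g \<alpha>)" using False by (simp add: field_simps)
    thus ?thesis using gle[of \<alpha>] by simp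
  qed
  have Fsc: "F (\<lambda>k. \<alpha> * dl 0 k) k = g \<alpha> * dl 0 k" if k: "k < n" for \<alpha> k
  proof (cases "k = 0")
    case True thus ?thesis by (simp add: g_def dl_def)
  next
    case False
    define d where "d = F (\<lambda>k. \<alpha> * dl 0 k)"
    have N: "N < n" using nN by simp
    have "(\<Sum>i<n. (cmod (tp n d $$ (i,N)))\<^sup>2) \<le> (op_norm (tp n d))\<^sup>2"
      by (rule col_le_op_norm(1)[OF tp_carrier N])
    also have "op_norm (tp n d) = cmod \<alpha>" unfolding d_def by (simp add: Fnorm tp_sc op_norm_scalar[OF n0])
    also have "(\<Sum>i<n. (cmod (tp n d $$ (i,N)))\<^sup>2) = (\<Sum>i<N. (cmod (d (N - i)))\<^sup>2) + (cmod (d 0))\<^sup>2"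
    proof -
      have "(\<Sum>i<n. (cmod (tp n d $$ (i,N)))\<^sup>2) = (\<Sum>i<N. (cmod (tp n d $$ (i,N)))\<^sup>2) + (cmod (tp n d $$ (N,N)))\<^sup>2"
        unfolding nN by simp
      also have "(\<Sum>i<N. (cmod (tp n d $$ (i,N)))\<^sup>2) = (\<Sum>i<N. (cmod (d (N - i)))\<^sup>2)"
        using nN by (intro sum.cong) auto
      finally show ?thesis using nN by simp
    qed
    also have "d 0 = g \<alpha>" by (simp add: d_def g_def)
    finally have le0: "(\<Sum>i<N. (cmod (d (N - i)))\<^sup>2) \<le> 0" using gnorm[of \<alpha>] by simp
    have "(\<Sum>i<N. (cmod (d (N - i)))\<^sup>2) = 0" using le0 by (intro antisym sum_nonneg) auto
    hence z: "\<forall>i\<in>{..<N}. (cmod (d (N - i)))\<^sup>2 = 0" by (subst (asm) sum_nonneg_eq_0_iff) auto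
    have "N - k \<in> {..<N}" "N - (N - k) = k" using False k nN by auto
    hence "d k = 0" using z by (metis norm_eq_zero power_eq_0_iff)
    thus ?thesis using False by (simp add: d_def dl_def)
  qed
  have phisc: "\<phi> (\<alpha> \<cdot>\<^sub>m 1\<^sub>m n) = g \<alpha> \<cdot>\<^sub>m 1\<^sub>m n" for \<alpha>
  proof -
    have "\<phi> (\<alpha> \<cdot>\<^sub>m 1\<^sub>m n) = tp n (F (\<lambda>k. \<alpha> * dl 0 k))" by (simp add: F tp_sc[symmetric])
    also have "\<dots> = tp n (\<lambda>k. g \<alpha> * dl 0 k)" by (rule tp_cong) (rule Fsc)
    also have "\<dots> = g \<alpha> \<cdot>\<^sub>m 1\<^sub>m n" by (rule tp_sc)
    finally show ?thesis .
  qed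
  have hom: "\<phi> (\<alpha> \<cdot>\<^sub>m A) = g \<alpha> \<cdot>\<^sub>m \<phi> A" if A: "A \<in> Alg n" for \<alpha> A
  proof -
    obtain c where c: "A = tp n c" using A by (auto simp: Alg_iff)
    have Ac: "A \<in> carrier_mat n n" using c by simp
    have "\<phi> A \<in> Alg n" using maps A by blast
    then obtain d where d: "\<phi> A = tp n d" by (auto simp: Alg_iff)
    have pAc: "\<phi> A \<in> carrier_mat n n" using d by simp
    have e1: "\<alpha> \<cdot>\<^sub>m A = (\<alpha> \<cdot>\<^sub>m 1\<^sub>m n) * A"
      using mult_smult_assoc_mat[OF one_carrier_mat Ac, of \<alpha>] Ac by simp
    have A2: "\<alpha> \<cdot>\<^sub>m 1\<^sub>m n \<in> Alg n" using tp_Alg tp_sc by metis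
    have "\<phi> (\<alpha> \<cdot>\<^sub>m A) = \<phi> (\<alpha> \<cdot>\<^sub>m 1\<^sub>m n) * \<phi> A" using mult A A2 e1 by simp
    also have "\<dots> = (g \<alpha> \<cdot>\<^sub>m 1\<^sub>m n) * \<phi> A" by (simp add: phisc)
    also have "\<dots> = g \<alpha> \<cdot>\<^sub>m \<phi> A"
      using mult_smult_assoc_mat[OF one_carrier_mat pAc, of "g \<alpha>"] pAc by simp
    finally show ?thesis .
  qed
  have Fdl0: "F (dl 0) k = dl 0 k" if "k < n" for k using Fsc[of k 1] g1 that by simp
  have FdlM: "F (dl m) k = dl m k" if "k < n" for m k
    using Fdl0 Fdlm that by (cases "m = 0") auto
  define u where "u c = (\<lambda>k. dl 0 k + c * dl 1 k)" for c
  define kk where "kk c = F (u c) 1" for c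
  have K: "F b 1 = kk (b 1)" if b0: "b 0 = 1" for b
  proof -
    define M where "M = N - 1"
    have MN: "N = Suc M" using N1 by (simp add: M_def)
    have Nn: "N < n" using nN by simp
    have eq: "conv b (dl M) j = conv (u (b 1)) (dl M) j" if j: "j < n" for j
    proof -
      have "j \<le> Suc M" using j nN MN by simp
      hence "j < M \<or> j = M \<or> j = Suc M" by auto
      thus ?thesis using b0 by (auto simp: conv_dl_right u_def dl_def)
    qed
    have L: "F (conv c (dl M)) N = F c 1" for c
    proof -
      have "F (conv c (dl M)) N = conv (F c) (F (dl M)) N" using Nn by (rule Fmult)
      also have "\<dots> = conv (F c) (dl M) N" using Nn FdlM by (intro conv_cong) auto
      finally show ?thesis unfolding MN by (simp add: conv_dl_right)
    qed
    have "F (conv b (dl M)) N = F (conv (u (b 1)) (dl M)) N" using Nn eq by (intro Fcong) auto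
    thus ?thesis using L[of b] L[of "u (b 1)"] by (simp add: kk_def)
  qed
  have u0: "u c 0 = 1" for c by (simp add: u_def dl_def)
  have kkadd: "kk (c + d) = kk c + kk d" for c d
  proof -
    have c0: "conv (u c) (u d) 0 = 1" "conv (u c) (u d) 1 = c + d" by (simp_all add: u_def dl_def)
    have "kk (c + d) = F (conv (u c) (u d)) 1" using K[of "conv (u c) (u d)", OF c0(1)] c0(2) by simp
    also have "\<dots> = conv (F (u c)) (F (u d)) 1" using n by (intro Fmult) simp
    also have "\<dots> = kk d + kk c" using F0[of "u c"] F0[of "u d"] g1 by (simp add: u0 kk_def)
    finally show ?thesis by simp
  qed
  have kk0: "kk 0 = 0" using kkadd[of 0 0] by simp
  have knat: "kk (of_nat m * c) = of_nat m * kk c" for m c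
    by (induction m) (simp_all add: kk0 kkadd distrib_right)
  have key: "\<exists>\<delta>>0. \<forall>\<epsilon>. \<epsilon> \<noteq> 0 \<and> cmod \<epsilon> < \<delta> \<longrightarrow> cmod (g \<epsilon> * kk (1 / \<epsilon>) - 1) < \<eta>"
    if \<eta>: "\<eta> > 0" for \<eta>
  proof -
    have SA: "Smat n \<in> Alg n" by (simp add: tp_S)
    obtain \<delta> where \<delta>: "\<delta> > 0" "\<forall>B\<in>Alg n. op_norm (B - Smat n) < \<delta> \<longrightarrow> op_norm (\<phi> B - \<phi> (Smat n)) < \<eta>"
      using cont SA \<eta> by blast
    show ?thesis
    proof (intro exI[of _ \<delta>] conjI allI impI)
      show "\<delta> > 0" by fact
      fix \<epsilon> assume e: "\<epsilon> \<noteq> 0 \<and> cmod \<epsilon> < \<delta>"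
      define B where "B = tp n (\<lambda>k. \<epsilon> * dl 0 k + dl 1 k)"
      have "B - Smat n = \<epsilon> \<cdot>\<^sub>m 1\<^sub>m n" unfolding B_def tp_S tp_minus tp_sc[symmetric]
        by (rule tp_cong) simp
      hence "op_norm (B - Smat n) < \<delta>" using e op_norm_scalar[OF n0] by simp
      hence lt: "op_norm (\<phi> B - Smat n) < \<eta>" using \<delta> fixS by (simp add: B_def)
      have "B = \<epsilon> \<cdot>\<^sub>m tp n (u (1 / \<epsilon>))" unfolding B_def tp_smult u_def using e
        by (intro tp_cong) (simp add: algebra_simps)
      hence "\<phi> B = g \<epsilon> \<cdot>\<^sub>m \<phi> (tp n (u (1 / \<epsilon>)))" using hom by simp
      hence eqB: "\<phi> B - Smat n = tp n (\<lambda>k. g \<epsilon> * F (u (1 / \<epsilon>)) k - dl 1 k)"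
        by (simp add: F tp_smult tp_S tp_minus)
      hence "(\<phi> B - Smat n) $$ (0,1) = g \<epsilon> * kk (1 / \<epsilon>) - 1" using n by (simp add: kk_def dl_def)
      moreover have "cmod ((\<phi> B - Smat n) $$ (0,1)) \<le> op_norm (\<phi> B - Smat n)"
        by (rule entry_le_op_norm[of _ n]) (use n eqB in auto)
      ultimately show "cmod (g \<epsilon> * kk (1 / \<epsilon>) - 1) < \<eta>" using lt by simp
    qed
  qed
  have LL: "kk 1 \<noteq> 0" "\<And>z. z \<noteq> 0 \<Longrightarrow> g z * kk (1 / z) = kk 1"
    by (rule lim_lemma[of g kk, OF key gmult knat g1], assumption)+
  have "(\<forall>z. g z = z) \<or> (\<forall>z. g z = cnj z)"
    by (rule char_lemma[of kk g, OF kkadd gmult gnorm LL(2) LL(1)])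
  thus ?thesis using hom by auto
qed
  

end
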